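(* Let $m,n\in\mathbb{P}$ and let $K_n=[n]\oplus([1]\sqcup[1])\oplus[n]$. For the poset $[m]\times K_n$ the following are equivalent: (a) $[m]\times K_n$ has a unique rank level of maximal size; (b) $m=1$ or $m=2n+1$; (c) $\mathcal{N}_{[m]\times K_n}$ is monic; (d) $\mathcal{N}_{[m]\times K_n}$ is palindromic.
   Context: $[k]=\{1<\cdots<k\}$ is a chain; $\oplus$ is the ordinal sum (every element of the first summand is below every element of the second), and $[1]\sqcup[1]$ is a two-element antichain. So $K_n$ consists of a chain $1<\cdots<n$, then two incomparable elements, then a chain of $n$ elements, with everything in a lower part below everything in a higher part. $[m]\times K_n$ has the product order; it is graded (all maximal chains have equal length, rank of minimal element $1$, rank increases by one along covers) and its rank levels are the sets of elements of equal rank. $\mathcal{N}_P(t)=\sum_A t^{|A|}$ over all antichains $A$ (including $\emptyset$). A polynomial $\sum_{k=0}^d a_kt^k$ with $a_d\neq0$ is monic if $a_d=1$ and palindromic if $a_k=a_{d-k}$ for all $k$. *)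

theory Defs
  imports "HOL-Computational_Algebra.Polynomial"
begin

definition is_antichain :: "'a set \<Rightarrow> ('a \<Rightarrow> 'a \<Rightarrow> bool) \<Rightarrow> 'a set \<Rightarrow> bool" where
  "is_antichain P le A \<longleftrightarrow> A \<subseteq> P \<and> (\<forall>x\<in>A. \<forall>y\<in>A. le x y \<longrightarrow> x = y)"

definition is_chain :: "'a set \<Rightarrow> ('a \<Rightarrow> 'a \<Rightarrow> bool) \<Rightarrow> 'a set \<Rightarrow> bool" where
  "is_chain P le C \<longleftrightarrow> C \<subseteq> P \<and> (\<forall>x\<in>C. \<forall>y\<in>C. le x y \<or> le y x)"

definition antichain_poly :: "'a set \<Rightarrow> ('a \<Rightarrow> 'a \<Rightarrow> bool) \<Rightarrow> int poly" where
  "antichain_poly P le = (\<Sum>A\<in>{A. is_antichain P le A}. monom 1 (card A))"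

(* rank of x: the maximal size of a chain of elements below x; for a graded poset this is
   the rank with minimal elements of rank 1, increasing by one along covers *)
definition poset_rank :: "'a set \<Rightarrow> ('a \<Rightarrow> 'a \<Rightarrow> bool) \<Rightarrow> 'a \<Rightarrow> nat" where
  "poset_rank P le x = Max (card ` {C. is_chain P le C \<and> (\<forall>y\<in>C. le y x)})"

definition rank_level :: "'a set \<Rightarrow> ('a \<Rightarrow> 'a \<Rightarrow> bool) \<Rightarrow> nat \<Rightarrow> 'a set" where
  "rank_level P le r = {x\<in>P. poset_rank P le x = r}"

definition unique_max_rank_level :: "'a set \<Rightarrow> ('a \<Rightarrow> 'a \<Rightarrow> bool) \<Rightarrow> bool" where
  "unique_max_rank_level P le \<longleftrightarrow>
     (\<exists>r\<in>poset_rank P le ` P. \<forall>r'\<in>poset_rank P le ` P.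
        r' \<noteq> r \<longrightarrow> card (rank_level P le r') < card (rank_level P le r))"

definition palindromic :: "'b::zero poly \<Rightarrow> bool" where
  "palindromic p \<longleftrightarrow> (\<forall>k\<le>degree p. coeff p k = coeff p (degree p - k))"

definition monic_poly :: "'b::{zero,one} poly \<Rightarrow> bool" where
  "monic_poly p \<longleftrightarrow> lead_coeff p = 1"

(* K_n = [n] \<oplus> ([1] \<sqcup> [1]) \<oplus> [n]: elements (l,t) with level l.
   Levels 1..n: the lower chain (tag 0); level n+1: the two incomparable elements
   (tags 0 and 1); levels n+2..2n+1: the upper chain (tag 0).
   Order: equal, or strictly lower level (ordinal sum). *)
definition K_carrier :: "nat \<Rightarrow> (nat \<times> nat) set" where
  "K_carrier n = {(l, 0) | l. 1 \<le> l \<and> l \<le> 2*n+1} \<union> {(n+1, 1)}"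

definition K_le :: "nat \<times> nat \<Rightarrow> nat \<times> nat \<Rightarrow> bool" where
  "K_le x y \<longleftrightarrow> x = y \<or> fst x < fst y"

definition MK_carrier :: "nat \<Rightarrow> nat \<Rightarrow> (nat \<times> (nat \<times> nat)) set" where
  "MK_carrier m n = {1..m} \<times> K_carrier n"

definition MK_le :: "nat \<times> (nat \<times> nat) \<Rightarrow> nat \<times> (nat \<times> nat) \<Rightarrow> bool" where
  "MK_le x y \<longleftrightarrow> fst x \<le> fst y \<and> K_le (snd x) (snd y)"

end

theory Submission
  imports Defs "HOL-Library.Product_Lexorder" "HOL-Library.FuncSet"
begin


definition gle :: "'a::linorder \<times> 'b::linorder \<Rightarrow> 'a \<times> 'b \<Rightarrow> bool" where
  "gle p q \<longleftrightarrow> fst p \<le> fst q \<and> snd p \<le> snd q"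

lemma gant_lt:
  assumes "is_antichain P gle A" "p \<in> A" "q \<in> A" "fst p < fst q"
  shows "snd q < snd p"
  using assms unfolding is_antichain_def gle_def
  by (metis less_le_not_le not_le_imp_less order_less_imp_le)

lemma gant_eq:
  assumes "is_antichain P gle A" "p \<in> A" "q \<in> A" "fst p = fst q"
  shows "p = q"
  using assms unfolding is_antichain_def gle_def
  by (metis nle_le)

lemma gant_eq2:
  assumes "is_antichain P gle A" "p \<in> A" "q \<in> A" "snd p = snd q"
  shows "p = q"
  using assms unfolding is_antichain_def gle_def
  by (metis nle_le)

lemma gant_inj_fst: "is_antichain P gle A \<Longrightarrow> inj_on fst A"
  by (meson gant_eq inj_onI)
lemma gant_inj_snd: "is_antichain P gle A \<Longrightarrow> inj_on snd A"
  by (meson gant_eq2 inj_onI)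

lemma gant_count:
  assumes "is_antichain P gle A" "finite A" "p \<in> A"
  shows "card {c \<in> fst ` A. c < fst p} = card {v \<in> snd ` A. snd p < v}"
proof -
  have "{c \<in> fst ` A. c < fst p} = fst ` {q\<in>A. fst q < fst p}" by auto
  also have "card \<dots> = card {q\<in>A. fst q < fst p}"
    by (rule card_image, rule inj_on_subset[OF gant_inj_fst[OF assms(1)]]) auto
  also have "{q\<in>A. fst q < fst p} = {q\<in>A. snd p < snd q}"
  proof (intro Collect_cong conj_cong refl iffI)
    fix q assume "q \<in> A" "fst q < fst p" then show "snd p < snd q" using gant_lt[OF assms(1) _ assms(3)] by blast
  next
    fix q assume q: "q \<in> A" "snd p < snd q"
    show "fst q < fst p"
    proof (rule ccontr)
      assume "\<not> fst q < fst p"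
      then consider "fst q = fst p" | "fst p < fst q" by fastforce
      then show False
      proof cases
        case 1 then have "q = p" using gant_eq[OF assms(1) q(1) assms(3)] by simp
        then show False using q by simp
      next
        case 2 then have "snd q < snd p" using gant_lt[OF assms(1) assms(3) q(1)] by simp
        then show False using q by simp
      qed
    qed
  qed
  also have "card \<dots> = card (snd ` {q\<in>A. snd p < snd q})"
    by (rule card_image[symmetric], rule inj_on_subset[OF gant_inj_snd[OF assms(1)]]) auto
  also have "snd ` {q\<in>A. snd p < snd q} = {v \<in> snd ` A. snd p < v}" by auto
  finally show ?thesis .
qed

lemma gant_unique:
  assumes "is_antichain P gle A" "is_antichain P' gle A'" "finite A" "finite A'"
    "fst ` A = fst ` A'" "snd ` A = snd ` A'"
  shows "A \<subseteq> A'"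
proof
  fix p assume p: "p \<in> A"
  then obtain q where q: "q \<in> A'" "fst q = fst p" using assms(5) by (metis imageE imageI)
  have c1: "card {v \<in> snd ` A. snd p < v} = card {v \<in> snd ` A. snd q < v}"
    using gant_count[OF assms(1,3) p] gant_count[OF assms(2,4) q(1)] q(2) assms(5,6) by simp
  have fin: "finite (snd ` A)" using assms(3) by simp
  have sq: "snd q \<in> snd ` A" using q assms(6) by auto
  have sp: "snd p \<in> snd ` A" using p by auto
  have "snd p = snd q"
  proof (rule ccontr)
    assume ne: "snd p \<noteq> snd q"
    show False
    proof (cases "snd p < snd q")
      case True
      have "{v \<in> snd ` A. snd q < v} \<subset> {v \<in> snd ` A. snd p < v}"
        using True sq by auto
      then have "card {v \<in> snd ` A. snd q < v} < card {v \<in> snd ` A. snd p < v}"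
        using fin by (intro psubset_card_mono) auto
      then show False using c1 by simp
    next
      case False
      then have "snd q < snd p" using ne by auto
      have "{v \<in> snd ` A. snd p < v} \<subset> {v \<in> snd ` A. snd q < v}"
        using \<open>snd q < snd p\<close> sp by auto
      then have "card {v \<in> snd ` A. snd p < v} < card {v \<in> snd ` A. snd q < v}"
        using fin by (intro psubset_card_mono) auto
      then show False using c1 by simp
    qed
  qed
  then have "p = q" using q(2) by (simp add: prod_eq_iff)
  then show "p \<in> A'" using q by simp
qed

lemma gant_exists:
  fixes I :: "'a::linorder set" and J :: "'b::linorder set"
  assumes "finite I" "finite J" "card I = card J"
  shows "\<exists>A. is_antichain (I \<times> J) gle A \<and> fst ` A = I \<and> snd ` A = J"
proof -
  define xs where "xs = sorted_list_of_set I"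
  define ys where "ys = rev (sorted_list_of_set J)"
  have lx: "length xs = card I" unfolding xs_def by simp
  have ly: "length ys = card I" unfolding ys_def using assms by simp
  have sx: "sorted_wrt (<) xs" unfolding xs_def by simp
  have sy: "sorted_wrt (>) ys" unfolding ys_def by (simp add: sorted_wrt_rev)
  define A where "A = set (zip xs ys)"
  have f: "fst ` A = I" unfolding A_def using lx ly assms
    by (metis map_fst_zip set_map xs_def set_sorted_list_of_set)
  have s: "snd ` A = J" unfolding A_def using lx ly assms
    by (metis map_snd_zip set_map ys_def set_sorted_list_of_set set_rev)
  have "is_antichain (I \<times> J) gle A"
    unfolding is_antichain_def
  proof safe
    fix a b assume "(a,b) \<in> A" then show "a \<in> I" "b \<in> J" using f s by force+
  next
    fix a b c d assume ab: "(a,b) \<in> A" and cd: "(c,d) \<in> A" and le: "gle (a,b) (c,d)"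
    from ab obtain i where i: "i < length xs" "xs!i = a" "ys!i = b"
      unfolding A_def using lx ly by (auto simp: set_zip)
    from cd obtain j where j: "j < length xs" "xs!j = c" "ys!j = d"
      unfolding A_def using lx ly by (auto simp: set_zip)
    have "i = j"
    proof (rule ccontr)
      assume "i \<noteq> j"
      then consider "i < j" | "j < i" by linarith
      then show False
      proof cases
        case 1
        have "b > d" using sy 1 i j lx ly by (metis sorted_wrt_nth_less)
        then show False using le unfolding gle_def by (auto dest: leD)
      next
        case 2
        have "a > c" using sx 2 i j by (metis sorted_wrt_nth_less)
        then show False using le unfolding gle_def by (auto dest: leD)
      qed
    qed
    then show "a = c" "b = d" using i j by auto
  qed
  then show ?thesis using f s by blast
qed



lemma is_antichain_mono: "is_antichain P le A \<Longrightarrow> P \<subseteq> P' \<Longrightarrow> is_antichain P' le A"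
  unfolding is_antichain_def by blast

lemma grid_card:
  fixes X :: "'a::linorder set" and Y :: "'b::linorder set"
  assumes fX: "finite X" and fY: "finite Y"
  shows "card {A. is_antichain (X \<times> Y) gle A \<and> card A = k \<and> Q (snd ` A)}
       = (card X choose k) * card {J. J \<subseteq> Y \<and> card J = k \<and> Q J}"
proof -
  let ?L = "{A. is_antichain (X \<times> Y) gle A \<and> card A = k \<and> Q (snd ` A)}"
  let ?R = "{I. I \<subseteq> X \<and> card I = k} \<times> {J. J \<subseteq> Y \<and> card J = k \<and> Q J}"
  have finA: "finite A" if "is_antichain (X \<times> Y) gle A" for A
    using that finite_subset[of A "X \<times> Y"] fX fY unfolding is_antichain_def by blast
  have "bij_betw (\<lambda>A. (fst ` A, snd ` A)) ?L ?R"
  proof (rule bij_betwI')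
    fix A B assume A: "A \<in> ?L" and B: "B \<in> ?L"
    show "((fst ` A, snd ` A) = (fst ` B, snd ` B)) = (A = B)"
    proof
      assume e: "(fst ` A, snd ` A) = (fst ` B, snd ` B)"
      have a: "is_antichain (X \<times> Y) gle A" and b: "is_antichain (X \<times> Y) gle B" using A B by blast+
      have e1: "fst ` A = fst ` B" and e2: "snd ` A = snd ` B" using e by (simp_all only: prod.inject)
      show "A = B"
        by (rule equalityI[OF gant_unique[OF a b finA[OF a] finA[OF b] e1 e2]
                  gant_unique[OF b a finA[OF b] finA[OF a] e1[symmetric] e2[symmetric]]])
    next
      assume "A = B" then show "(fst ` A, snd ` A) = (fst ` B, snd ` B)" by (rule arg_cong)
    qed
  next
    fix A assume A: "A \<in> ?L"
    then have a: "is_antichain (X \<times> Y) gle A" and ck: "card A = k" and q: "Q (snd ` A)" by blast+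
    have c1: "card (fst ` A) = k" using card_image[OF gant_inj_fst[OF a]] ck by (rule trans)
    have c2: "card (snd ` A) = k" using card_image[OF gant_inj_snd[OF a]] ck by (rule trans)
    have sA: "A \<subseteq> X \<times> Y" using a unfolding is_antichain_def by (rule conjunct1)
    have s: "fst ` A \<subseteq> X" "snd ` A \<subseteq> Y" using sA by force+
    show "(fst ` A, snd ` A) \<in> ?R" by (intro SigmaI CollectI conjI c1 c2 s q)
  next
    fix IJ assume IJ: "IJ \<in> ?R"
    obtain I J where ij: "IJ = (I, J)" by (cases IJ) blast
    have IJ': "I \<in> {I. I \<subseteq> X \<and> card I = k} \<and> J \<in> {J. J \<subseteq> Y \<and> card J = k \<and> Q J}"
      using IJ unfolding ij by (rule iffD1[OF mem_Sigma_iff])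
    have I: "I \<subseteq> X" "card I = k" and J: "J \<subseteq> Y" "card J = k" "Q J" using IJ' unfolding mem_Collect_eq by blast+
    have fI: "finite I" "finite J" using finite_subset[OF I(1) fX] finite_subset[OF J(1) fY] by blast+
    have cIJ: "card I = card J" using I(2) J(2) by (rule trans_sym)
    obtain A where A: "is_antichain (I \<times> J) gle A" "fst ` A = I" "snd ` A = J"
      using gant_exists[OF fI cIJ] by blast
    have "I \<times> J \<subseteq> X \<times> Y" using I(1) J(1) by (rule Sigma_mono)
    then have a: "is_antichain (X \<times> Y) gle A" by (rule is_antichain_mono[OF A(1)])
    have "card A = k" using card_image[OF gant_inj_fst[OF a]] unfolding A(2) using I(2) by (rule trans[OF sym])
    moreover have "Q (snd ` A)" unfolding A(3) by (rule J(3))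
    ultimately have "A \<in> ?L" using a by (intro CollectI conjI)
    moreover have "IJ = (fst ` A, snd ` A)" unfolding ij A(2,3) by (rule refl)
    ultimately show "\<exists>A\<in>?L. IJ = (fst ` A, snd ` A)" by (rule bexI[rotated])
  qed
  then have "card ?L = card ?R" by (rule bij_betw_same_card)
  also have "\<dots> = (card X choose k) * card {J. J \<subseteq> Y \<and> card J = k \<and> Q J}"
    by (simp add: card_cartesian_product n_subsets[OF fX])
  finally show ?thesis .
qed


lemma subsets_containing:
  assumes "finite Y" "Z \<subseteq> Y"
  shows "card {J. J \<subseteq> Y \<and> card J = k \<and> Z \<subseteq> J} = (if card Z \<le> k then (card Y - card Z) choose (k - card Z) else 0)"
proof (cases "card Z \<le> k")
  case True
  have fZ: "finite Z" using assms finite_subset by blast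
  have "bij_betw (\<lambda>J. J - Z) {J. J \<subseteq> Y \<and> card J = k \<and> Z \<subseteq> J} {B. B \<subseteq> Y - Z \<and> card B = k - card Z}"
  proof (rule bij_betwI[where g = "\<lambda>B. B \<union> Z"])
    show "(\<lambda>J. J - Z) \<in> {J. J \<subseteq> Y \<and> card J = k \<and> Z \<subseteq> J} \<rightarrow> {B. B \<subseteq> Y - Z \<and> card B = k - card Z}"
      using fZ by (auto simp: card_Diff_subset finite_subset[OF _ assms(1)])
    show "(\<lambda>B. B \<union> Z) \<in> {B. B \<subseteq> Y - Z \<and> card B = k - card Z} \<rightarrow> {J. J \<subseteq> Y \<and> card J = k \<and> Z \<subseteq> J}"
    proof
      fix B assume B: "B \<in> {B. B \<subseteq> Y - Z \<and> card B = k - card Z}"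
      have fB: "finite B" using B assms(1) finite_subset by auto
      have "card (B \<union> Z) = card B + card Z" using B fB fZ by (intro card_Un_disjoint) auto
      then show "B \<union> Z \<in> {J. J \<subseteq> Y \<and> card J = k \<and> Z \<subseteq> J}" using B True assms by auto
    qed
  qed auto
  then have "card {J. J \<subseteq> Y \<and> card J = k \<and> Z \<subseteq> J} = card {B. B \<subseteq> Y - Z \<and> card B = k - card Z}"
    by (rule bij_betw_same_card)
  also have "\<dots> = card (Y - Z) choose (k - card Z)" using assms by (simp add: n_subsets)
  finally show ?thesis using True assms fZ by (simp add: card_Diff_subset)
next
  case False
  have "{J. J \<subseteq> Y \<and> card J = k \<and> Z \<subseteq> J} = {}"
  proof safe
    fix J assume "J \<subseteq> Y" "Z \<subseteq> J" "k = card J"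
    then have "card Z \<le> card J" using assms by (meson card_mono finite_subset)
    then show "J \<in> {}" using False \<open>k = card J\<close> by simp
  qed
  then have "card {J. J \<subseteq> Y \<and> card J = k \<and> Z \<subseteq> J} = 0" by (simp only: card.empty)
  then show ?thesis using False by (simp only: if_False)
qed



lemma K_mem: "(l, t) \<in> K_carrier n \<longleftrightarrow> (t = 0 \<and> 1 \<le> l \<and> l \<le> 2*n+1) \<or> (l = n+1 \<and> t = 1)"
  unfolding K_carrier_def by auto

lemma MK_mem: "(c, (l, t)) \<in> MK_carrier m n \<longleftrightarrow> 1 \<le> c \<and> c \<le> m \<and> ((t = 0 \<and> 1 \<le> l \<and> l \<le> 2*n+1) \<or> (l = n+1 \<and> t = 1))"
  unfolding MK_carrier_def by (auto simp: K_mem)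

lemma MK_le_simp: "MK_le (c, (l, t)) (c', (l', t')) \<longleftrightarrow> c \<le> c' \<and> ((l = l' \<and> t = t') \<or> l < l')"
  unfolding MK_le_def K_le_def by auto

lemma gle_simp: "gle (c, (l, t)) (c', (l', t')) \<longleftrightarrow> c \<le> c' \<and> (l < l' \<or> (l \<le> l' \<and> t \<le> t'))"
  unfolding gle_def by auto

lemma card_K: "card (K_carrier n) = 2*n+2"
proof -
  have "K_carrier n = (\<lambda>l. (l, 0::nat)) ` {1..2*n+1} \<union> {(n+1, 1)}"
    unfolding K_carrier_def by auto
  moreover have "card ((\<lambda>l. (l, 0::nat)) ` {1..2*n+1}) = 2*n+1"
    by (subst card_image) (auto simp: inj_on_def)
  moreover have "(n+1, 1::nat) \<notin> (\<lambda>l. (l, 0::nat)) ` {1..2*n+1}" by auto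
  ultimately show ?thesis by simp
qed

lemma finite_K: "finite (K_carrier n)"
  unfolding K_carrier_def by (auto intro: finite_subset[of _ "{1..2*n+1} \<times> {0}"])

lemma finite_MK: "finite (MK_carrier m n)"
  unfolding MK_carrier_def using finite_K by auto

definition bad :: "nat \<Rightarrow> (nat \<times> nat \<times> nat) set \<Rightarrow> bool" where
  "bad n A \<longleftrightarrow> (\<exists>x y. (x, (n+1, 0)) \<in> A \<and> (y, (n+1, 1)) \<in> A \<and> x \<le> y)"

lemma type1_eq:
  "{A. is_antichain (MK_carrier m n) MK_le A \<and> card A = k \<and> \<not> bad n A}
   = {A. is_antichain ({1..m} \<times> K_carrier n) gle A \<and> card A = k \<and> True}"
proof (intro Collect_cong iffI)
  fix A
  assume A: "is_antichain (MK_carrier m n) MK_le A \<and> card A = k \<and> \<not> bad n A"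
  have "is_antichain ({1..m} \<times> K_carrier n) gle A"
    unfolding is_antichain_def
  proof (intro conjI ballI impI)
    show "A \<subseteq> {1..m} \<times> K_carrier n" using A unfolding is_antichain_def MK_carrier_def by auto
  next
    fix p q assume p: "p \<in> A" and q: "q \<in> A" and g: "gle p q"
    obtain c l t where pp: "p = (c, (l, t))" by (metis prod.exhaust)
    obtain c' l' t' where qq: "q = (c', (l', t'))" by (metis prod.exhaust)
    have pm: "p \<in> MK_carrier m n" "q \<in> MK_carrier m n" using A p q unfolding is_antichain_def by auto
    show "p = q"
    proof (cases "MK_le p q")
      case True then show ?thesis using A p q unfolding is_antichain_def by blast
    next
      case False
      then have "l = n+1" "l' = n+1" "t = 0" "t' = 1" "c \<le> c'"
        using g pm unfolding pp qq by (auto simp: MK_le_simp gle_simp MK_mem)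
      then show ?thesis using A p q unfolding bad_def pp qq by auto
    qed
  qed
  then show "is_antichain ({1..m} \<times> K_carrier n) gle A \<and> card A = k \<and> True" using A by simp
next
  fix A
  assume A: "is_antichain ({1..m} \<times> K_carrier n) gle A \<and> card A = k \<and> True"
  have le: "gle p q" if "MK_le p q" for p q :: "nat \<times> nat \<times> nat"
    using that unfolding MK_le_def K_le_def gle_def by (auto simp: less_eq_prod_def)
  have "is_antichain (MK_carrier m n) MK_le A"
    using A le unfolding is_antichain_def MK_carrier_def by blast
  moreover have "\<not> bad n A"
  proof
    assume "bad n A"
    then obtain x y where "(x, (n+1, 0)) \<in> A" "(y, (n+1, 1)) \<in> A" "x \<le> y" unfolding bad_def by blast
    then have "(x, (n+1, 0::nat)) = (y, (n+1, 1))" using A unfolding is_antichain_def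
      by (metis gle_simp le_refl zero_le_one)
    then show False by simp
  qed
  ultimately show "is_antichain (MK_carrier m n) MK_le A \<and> card A = k \<and> \<not> bad n A" using A by simp
qed

lemma type1_card:
  "card {A. is_antichain (MK_carrier m n) MK_le A \<and> card A = k \<and> \<not> bad n A}
   = (m choose k) * ((2*n+2) choose k)"
  unfolding type1_eq
  by (subst grid_card) (auto simp: finite_K n_subsets card_K)



definition gmap :: "nat \<Rightarrow> nat \<times> nat \<times> nat \<Rightarrow> nat \<times> nat \<times> nat" where
  "gmap n p = (case p of (c, (l, t)) \<Rightarrow>
     if l \<le> n then (c+1, (l, t))
     else if l = n+1 \<and> t = 1 then (c+1, (n+1, 0))
     else if l = n+1 \<and> t = 0 then (c, (n+1, 1))
     else (c, (l, t)))"

definition hmap :: "nat \<Rightarrow> nat \<times> nat \<times> nat \<Rightarrow> nat \<times> nat \<times> nat" where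
  "hmap n p = (case p of (c, (l, t)) \<Rightarrow>
     if l \<le> n then (c-1, (l, t))
     else if l = n+1 \<and> t = 0 then (c-1, (n+1, 1))
     else if l = n+1 \<and> t = 1 then (c, (n+1, 0))
     else (c, (l, t)))"

lemma gmap_low: "l \<le> n \<Longrightarrow> gmap n (c, (l, t)) = (c+1, (l, t))" by (simp add: gmap_def)
lemma gmap_m1: "gmap n (c, (n+1, 1)) = (c+1, (n+1, 0))" by (simp add: gmap_def)
lemma gmap_m0: "gmap n (c, (n+1, 0)) = (c, (n+1, 1))" by (simp add: gmap_def)
lemma gmap_high: "n+1 < l \<Longrightarrow> gmap n (c, (l, t)) = (c, (l, t))" by (simp add: gmap_def)
lemma hmap_low: "l \<le> n \<Longrightarrow> hmap n (c, (l, t)) = (c-1, (l, t))" by (simp add: hmap_def)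
lemma hmap_m1: "hmap n (c, (n+1, 1)) = (c, (n+1, 0))" by (simp add: hmap_def)
lemma hmap_m0: "hmap n (c, (n+1, 0)) = (c-1, (n+1, 1))" by (simp add: hmap_def)
lemma hmap_high: "n+1 < l \<Longrightarrow> hmap n (c, (l, t)) = (c, (l, t))" by (simp add: hmap_def)

lemma gmap_m1': "gmap n (c, (Suc n, Suc 0)) = (Suc c, (Suc n, 0))" by (simp add: gmap_def)
lemma gmap_m0': "gmap n (c, (Suc n, 0)) = (c, (Suc n, Suc 0))" by (simp add: gmap_def)
lemma hmap_m1': "hmap n (c, (Suc n, Suc 0)) = (c, (Suc n, 0))" by (simp add: hmap_def)
lemma hmap_m0': "hmap n (c, (Suc n, 0)) = (c-1, (Suc n, Suc 0))" by (simp add: hmap_def)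
lemmas gh_simps = gmap_low gmap_m1 gmap_m0 gmap_high hmap_low hmap_m1 hmap_m0 hmap_high gmap_m1' gmap_m0' hmap_m1' hmap_m0'

lemma K_cases:
  assumes "(l, t) \<in> K_carrier n"
  obtains (low) "t = 0" "1 \<le> l" "l \<le> n" | (m0) "l = n+1" "t = 0" | (m1) "l = n+1" "t = 1"
    | (high) "t = 0" "n+1 < l" "l \<le> 2*n+1"
  using assms unfolding K_mem
proof (elim disjE conjE)
  assume h: "t = 0" "1 \<le> l" "l \<le> 2*n+1"
  consider (a) "l \<le> n" | (b) "l = n+1" | (c) "n+1 < l" by linarith
  then show thesis
  proof cases
    case a then show ?thesis by (rule that(1)[OF h(1) h(2)])
  next
    case b then show ?thesis using h(1) by (rule that(2))
  next
    case c then show ?thesis by (rule that(4)[OF h(1) _ h(3)])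
  qed
next
  assume "l = n+1" "t = 1" then show thesis by (rule that(3))
qed

lemma MK_cases:
  assumes "(c, (l, t)) \<in> MK_carrier m n"
  obtains (low) "t = 0" "1 \<le> l" "l \<le> n" | (m0) "l = n+1" "t = 0" | (m1) "l = n+1" "t = 1"
    | (high) "t = 0" "n+1 < l" "l \<le> 2*n+1"
proof -
  have k: "(l, t) \<in> K_carrier n" using assms unfolding MK_carrier_def by blast
  show thesis
  proof (rule K_cases[OF k])
    assume "t = 0" "1 \<le> l" "l \<le> n" then show thesis by (rule that(1))
  next
    assume "l = n+1" "t = 0" then show thesis by (rule that(2))
  next
    assume "l = n+1" "t = 1" then show thesis by (rule that(3))
  next
    assume "t = 0" "n+1 < l" "l \<le> 2*n+1" then show thesis by (rule that(4))
  qed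
qed

lemma MK_c: "(c, (l, t)) \<in> MK_carrier m n \<Longrightarrow> 1 \<le> c \<and> c \<le> m"
  unfolding MK_carrier_def by auto

lemma hg: "p \<in> MK_carrier m n \<Longrightarrow> hmap n (gmap n p) = p"
proof -
  assume p: "p \<in> MK_carrier m n"
  obtain c l t where pp: "p = (c, (l, t))" by (metis prod_cases3)
  show ?thesis using p unfolding pp
    by (cases rule: MK_cases[OF p[unfolded pp]]) (simp_all add: gh_simps)
qed

lemma gh: "p \<in> {1..m+1} \<times> K_carrier n \<Longrightarrow> gmap n (hmap n p) = p"
proof -
  assume p: "p \<in> {1..m+1} \<times> K_carrier n"
  obtain c l t where pp: "p = (c, (l, t))" by (metis prod_cases3)
  have k: "(l, t) \<in> K_carrier n" and c: "1 \<le> c" using p unfolding pp by auto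
  show ?thesis unfolding pp
    by (cases rule: K_cases[OF k]) (use c in \<open>simp_all add: gh_simps\<close>)
qed

lemma gmap_gle:
  assumes "(c, (l, t)) \<in> MK_carrier m n" "(c', (l', t')) \<in> MK_carrier m n"
    and g: "gle (gmap n (c, (l, t))) (gmap n (c', (l', t')))"
    and nm: "\<not> (l = n+1 \<and> l' = n+1)"
  shows "MK_le (c, (l, t)) (c', (l', t'))"
  by (cases rule: MK_cases[OF assms(1)]; cases rule: MK_cases[OF assms(2)];
      use g nm in \<open>simp add: gh_simps gle_simp MK_le_simp; linarith\<close>)

lemma ant_same_level:
  assumes "is_antichain P MK_le A" "(c, u) \<in> A" "(c', u) \<in> A"
  shows "c = c'"
proof -
  have "MK_le (c, u) (c', u) \<or> MK_le (c', u) (c, u)" unfolding MK_le_def K_le_def by auto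
  then show ?thesis using assms unfolding is_antichain_def by blast
qed

lemma type2_fwd:
  assumes A: "is_antichain (MK_carrier m n) MK_le A" "bad n A"
  shows "is_antichain ({1..m+1} \<times> K_carrier n) gle (gmap n ` A)
         \<and> {(n+1, 0), (n+1, 1)} \<subseteq> snd ` gmap n ` A"
proof -
  obtain x y where xy: "(x, (n+1, 0)) \<in> A" "(y, (n+1, 1)) \<in> A" "x \<le> y"
    using A(2) unfolding bad_def by blast
  have sub: "A \<subseteq> MK_carrier m n" using A(1) unfolding is_antichain_def by blast
  have anti: "\<And>p q. p \<in> A \<Longrightarrow> q \<in> A \<Longrightarrow> MK_le p q \<Longrightarrow> p = q"
    using A(1) unfolding is_antichain_def by blast
  have m0: "c = x" if "(c, (n+1, 0)) \<in> A" for c using ant_same_level[OF A(1) that xy(1)] .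
  have m1: "c = y" if "(c, (n+1, 1)) \<in> A" for c using ant_same_level[OF A(1) that xy(2)] .
  have img: "gmap n ` A \<subseteq> {1..m+1} \<times> K_carrier n"
  proof
    fix q assume "q \<in> gmap n ` A"
    then obtain c l t where p: "(c, (l, t)) \<in> A" "q = gmap n (c, (l, t))" by (metis imageE prod_cases3)
    then have pm: "(c, (l, t)) \<in> MK_carrier m n" using sub by blast
    have c: "1 \<le> c" "c \<le> m" using MK_c[OF pm] by auto
    show "q \<in> {1..m+1} \<times> K_carrier n" unfolding p(2)
      by (cases rule: MK_cases[OF pm]) (use c in \<open>simp_all add: gh_simps K_mem\<close>)
  qed
  have ac: "gp = gq" if g123: "gp \<in> gmap n ` A" "gq \<in> gmap n ` A" "gle gp gq" for gp gq
  proof -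
    obtain a where a: "gp = gmap n a" "a \<in> A" using g123(1) by blast
    obtain b where b: "gq = gmap n b" "b \<in> A" using g123(2) by blast
    obtain c l t where aa: "a = (c, (l, t))" by (rule prod_cases3)
    obtain c' l' t' where bb: "b = (c', (l', t'))" by (rule prod_cases3)
    have p: "(c, (l, t)) \<in> A" using a(2) unfolding aa .
    have q: "(c', (l', t')) \<in> A" using b(2) unfolding bb .
    have pm: "(c, (l, t)) \<in> MK_carrier m n" "(c', (l', t')) \<in> MK_carrier m n" using sub p q by blast+
    have g: "gle (gmap n (c, (l, t))) (gmap n (c', (l', t')))" using g123(3) unfolding a(1) b(1) aa bb .
    have "MK_le (c, (l, t)) (c', (l', t')) \<or> (c, (l, t)) = (c', (l', t'))"
    proof (cases "l = n+1 \<and> l' = n+1")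
      case False
      show ?thesis using gmap_gle[OF pm g False] by (rule disjI1)
    next
      case True
      then have l: "l = n+1" "l' = n+1" by auto
      have t: "t = 0 \<or> t = 1" "t' = 0 \<or> t' = 1" using pm unfolding MK_mem by auto
      consider (a) "t = 0" "t' = 0" | (b) "t = 0" "t' = 1" | (c) "t = 1" "t' = 0" | (d) "t = 1" "t' = 1"
        using t by blast
      then show ?thesis
      proof cases
        case a
        have "c = x" "c' = x" using m0 p q unfolding l a by auto
        then show ?thesis unfolding l a by simp
      next
        case b
        have "gle (c, (n+1, 1::nat)) (c'+1, (n+1, 0::nat))" using g unfolding l b by (simp only: gmap_m0 gmap_m1)
        then show ?thesis by (simp add: gle_simp)
      next
        case c
        have e: "c = y" "c' = x" using m0 m1 p q unfolding l c by auto
        have "gle (c+1, (n+1, 0::nat)) (c', (n+1, 1::nat))" using g unfolding l c by (simp only: gmap_m0 gmap_m1)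
        then show ?thesis using e xy(3) by (simp add: gle_simp)
      next
        case d
        have "c = y" "c' = y" using m1 p q unfolding l d by auto
        then show ?thesis unfolding l d by simp
      qed
    qed
    then have "(c, (l, t)) = (c', (l', t'))" using anti p q by blast
    then show ?thesis unfolding a(1) b(1) aa bb by simp
  qed
  have ia: "is_antichain ({1..m+1} \<times> K_carrier n) gle (gmap n ` A)"
    unfolding is_antichain_def using img ac by blast
  have "(x, (n+1, 1)) \<in> gmap n ` A" using xy(1) gmap_m0[of n x] by (metis imageI)
  then have "(n+1, 1) \<in> snd ` gmap n ` A" by (metis imageI snd_conv)
  moreover have "(y+1, (n+1, 0)) \<in> gmap n ` A" using xy(2) gmap_m1[of n y] by (metis imageI)
  then have "(n+1, 0) \<in> snd ` gmap n ` A" by (metis imageI snd_conv)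
  ultimately show ?thesis using ia by blast
qed



lemma gant_same_snd:
  assumes "is_antichain P gle B" "(c, u) \<in> B" "(c', u) \<in> B"
  shows "c = c'"
  using gant_eq2[OF assms(1,2,3)] by simp

lemma hmap_le:
  assumes pk: "(l, t) \<in> K_carrier n" "(l', t') \<in> K_carrier n"
    and c1: "1 \<le> c" "1 \<le> c'" and wu: "w < u" "1 \<le> w"
    and lo: "l \<le> n \<Longrightarrow> u < c" "l' \<le> n \<Longrightarrow> u < c'"
    and hi: "n+1 < l \<Longrightarrow> c < w" "n+1 < l' \<Longrightarrow> c' < w"
    and mm0: "l = n+1 \<Longrightarrow> t = 0 \<Longrightarrow> c = u" "l' = n+1 \<Longrightarrow> t' = 0 \<Longrightarrow> c' = u"
    and mm1: "l = n+1 \<Longrightarrow> t = 1 \<Longrightarrow> c = w" "l' = n+1 \<Longrightarrow> t' = 1 \<Longrightarrow> c' = w"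
    and le: "MK_le (hmap n (c, (l, t))) (hmap n (c', (l', t')))"
  shows "gle (c, (l, t)) (c', (l', t')) \<or> (c, (l, t)) = (c', (l', t'))"
  by (cases rule: K_cases[OF pk(1)]; cases rule: K_cases[OF pk(2)];
      use c1 wu lo hi mm0 mm1 le in \<open>simp add: gh_simps gle_simp MK_le_simp; auto\<close>)

lemma type2_bwd:
  assumes B: "is_antichain ({1..m+1} \<times> K_carrier n) gle B" "{(n+1, 0), (n+1, 1)} \<subseteq> snd ` B"
  shows "is_antichain (MK_carrier m n) MK_le (hmap n ` B) \<and> bad n (hmap n ` B)"
proof -
  have "(n+1, 0::nat) \<in> snd ` B" using B(2) by blast
  then obtain pu where pu: "(n+1, 0::nat) = snd pu" "pu \<in> B" by blast
  define u where "u = fst pu"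
  have u: "(u, (n+1, 0)) \<in> B" using pu unfolding u_def by (metis prod.collapse)
  have "(n+1, 1::nat) \<in> snd ` B" using B(2) by blast
  then obtain pw where pw: "(n+1, 1::nat) = snd pw" "pw \<in> B" by blast
  define w where "w = fst pw"
  have w: "(w, (n+1, 1)) \<in> B" using pw unfolding w_def by (metis prod.collapse)
  have sub: "B \<subseteq> {1..m+1} \<times> K_carrier n" using B(1) unfolding is_antichain_def by blast
  have anti: "\<And>p q. p \<in> B \<Longrightarrow> q \<in> B \<Longrightarrow> gle p q \<Longrightarrow> p = q"
    using B(1) unfolding is_antichain_def by blast
  have Bm: "1 \<le> c \<and> c \<le> m+1 \<and> (l, t) \<in> K_carrier n" if "(c, (l, t)) \<in> B" for c l t
  proof -
    have "(c, (l, t)) \<in> {1..m+1} \<times> K_carrier n" using sub that by blast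
    then show ?thesis by (simp only: mem_Sigma_iff atLeastAtMost_iff)
  qed
  have wu: "w < u"
  proof (rule ccontr)
    assume "\<not> w < u"
    then have "gle (u, (n+1, 0::nat)) (w, (n+1, 1::nat))" by (simp add: gle_simp)
    then have "(u, (n+1, 0::nat)) = (w, (n+1, 1::nat))" using anti[OF u w] by blast
    then show False by simp
  qed
  have w1: "1 \<le> w" using Bm[OF w] by blast
  have um: "u \<le> m+1" using Bm[OF u] by blast
  have m0: "c = u" if "(c, (n+1, 0)) \<in> B" for c using gant_same_snd[OF B(1) that u] .
  have m1: "c = w" if "(c, (n+1, 1)) \<in> B" for c using gant_same_snd[OF B(1) that w] .
  have low: "u < c" if "(c, (l, t)) \<in> B" "l \<le> n" for c l t
  proof (rule ccontr)
    assume "\<not> u < c"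
    then have "gle (c, (l, t)) (u, (n+1, 0))" using that(2) by (simp add: gle_simp)
    then have "(c, (l, t)) = (u, (n+1, 0))" using anti[OF that(1) u] by blast
    then show False using that(2) by simp
  qed
  have high: "c < w" if "(c, (l, t)) \<in> B" "n+1 < l" for c l t
  proof (rule ccontr)
    assume "\<not> c < w"
    then have "gle (w, (n+1, 1)) (c, (l, t))" using that(2) by (simp add: gle_simp)
    then have "(w, (n+1, 1)) = (c, (l, t))" using anti[OF w that(1)] by blast
    then show False using that(2) by simp
  qed
  have img: "hmap n ` B \<subseteq> MK_carrier m n"
  proof
    fix q assume "q \<in> hmap n ` B"
    then obtain a where a: "q = hmap n a" "a \<in> B" by blast
    obtain c l t where aa: "a = (c, (l, t))" by (rule prod_cases3)
    have p: "(c, (l, t)) \<in> B" using a(2) unfolding aa .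
    have c: "1 \<le> c" "c \<le> m+1" and k: "(l, t) \<in> K_carrier n" using Bm[OF p] by blast+
    have lo: "l \<le> n \<Longrightarrow> u < c" using low[OF p] .
    have hi: "n+1 < l \<Longrightarrow> c < w" using high[OF p] .
    have mm0: "l = n+1 \<Longrightarrow> t = 0 \<Longrightarrow> c = u" using m0 p by blast
    have mm1: "l = n+1 \<Longrightarrow> t = 1 \<Longrightarrow> c = w" using m1 p by blast
    show "q \<in> MK_carrier m n" unfolding a(1) aa
      by (cases rule: K_cases[OF k]; use c lo hi mm0 mm1 wu w1 um in \<open>simp add: gh_simps MK_mem; linarith\<close>)
  qed
  have ac: "hp = hq" if h123: "hp \<in> hmap n ` B" "hq \<in> hmap n ` B" "MK_le hp hq" for hp hq
  proof -
    obtain a where a: "hp = hmap n a" "a \<in> B" using h123(1) by blast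
    obtain b where b: "hq = hmap n b" "b \<in> B" using h123(2) by blast
    obtain c l t where aa: "a = (c, (l, t))" by (rule prod_cases3)
    obtain c' l' t' where bb: "b = (c', (l', t'))" by (rule prod_cases3)
    have p: "(c, (l, t)) \<in> B" using a(2) unfolding aa .
    have q: "(c', (l', t')) \<in> B" using b(2) unfolding bb .
    have le: "MK_le (hmap n (c, (l, t))) (hmap n (c', (l', t')))" using h123(3) unfolding a(1) b(1) aa bb .
    have "gle (c, (l, t)) (c', (l', t')) \<or> (c, (l, t)) = (c', (l', t'))"
    proof (rule hmap_le[OF _ _ _ _ wu w1 _ _ _ _ _ _ _ _ le])
      show "(l, t) \<in> K_carrier n" "(l', t') \<in> K_carrier n" "1 \<le> c" "1 \<le> c'" using Bm p q by blast+
      show "l \<le> n \<Longrightarrow> u < c" "l' \<le> n \<Longrightarrow> u < c'" using low p q by blast+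
      show "n+1 < l \<Longrightarrow> c < w" "n+1 < l' \<Longrightarrow> c' < w" using high p q by blast+
      show "l = n+1 \<Longrightarrow> t = 0 \<Longrightarrow> c = u" "l' = n+1 \<Longrightarrow> t' = 0 \<Longrightarrow> c' = u" using m0 p q by blast+
      show "l = n+1 \<Longrightarrow> t = 1 \<Longrightarrow> c = w" "l' = n+1 \<Longrightarrow> t' = 1 \<Longrightarrow> c' = w" using m1 p q by blast+
    qed
    then have "(c, (l, t)) = (c', (l', t'))" using anti p q by blast
    then show ?thesis unfolding a(1) b(1) aa bb by simp
  qed
  have ia: "is_antichain (MK_carrier m n) MK_le (hmap n ` B)"
    unfolding is_antichain_def using img ac by blast
  have "(w, (n+1, 0)) \<in> hmap n ` B" using w hmap_m1[of n w] by (metis imageI)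
  moreover have "(u-1, (n+1, 1)) \<in> hmap n ` B" using u hmap_m0[of n u] by (metis imageI)
  moreover have "w \<le> u - 1" using wu by simp
  ultimately have "bad n (hmap n ` B)" unfolding bad_def by blast
  then show ?thesis using ia by blast
qed



lemma type2_card:
  "card {A. is_antichain (MK_carrier m n) MK_le A \<and> card A = k \<and> bad n A}
   = ((m+1) choose k) * (if 2 \<le> k then (2*n) choose (k-2) else 0)"
proof -
  let ?S = "{A. is_antichain (MK_carrier m n) MK_le A \<and> card A = k \<and> bad n A}"
  let ?T = "{B. is_antichain ({1..m+1} \<times> K_carrier n) gle B \<and> card B = k \<and> {(n+1, 0), (n+1, 1)} \<subseteq> snd ` B}"
  have fw: "gmap n ` A \<in> ?T" if A: "A \<in> ?S" for A
  proof -
    have a: "is_antichain (MK_carrier m n) MK_le A" and ck: "card A = k" and bd: "bad n A"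
      using A unfolding mem_Collect_eq by blast+
    have sub: "A \<subseteq> MK_carrier m n" using a unfolding is_antichain_def by (rule conjunct1)
    have "inj_on (gmap n) A"
    proof (rule inj_on_inverseI[where g = "hmap n"])
      fix x assume "x \<in> A" then show "hmap n (gmap n x) = x" using sub hg by blast
    qed
    then have c: "card (gmap n ` A) = k" using ck by (simp add: card_image)
    have t: "is_antichain ({1..m+1} \<times> K_carrier n) gle (gmap n ` A)
         \<and> {(n+1, 0), (n+1, 1)} \<subseteq> snd ` gmap n ` A" by (rule type2_fwd[OF a bd])
    show ?thesis unfolding mem_Collect_eq using t c by blast
  qed
  have bw: "hmap n ` B \<in> ?S" if B: "B \<in> ?T" for B
  proof -
    have a: "is_antichain ({1..m+1} \<times> K_carrier n) gle B" and ck: "card B = k"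
      and bd: "{(n+1, 0), (n+1, 1)} \<subseteq> snd ` B"
      using B unfolding mem_Collect_eq by blast+
    have sub: "B \<subseteq> {1..m+1} \<times> K_carrier n" using a unfolding is_antichain_def by (rule conjunct1)
    have "inj_on (hmap n) B"
    proof (rule inj_on_inverseI[where g = "gmap n"])
      fix x assume "x \<in> B" then show "gmap n (hmap n x) = x" using sub gh by blast
    qed
    then have c: "card (hmap n ` B) = k" using ck by (simp add: card_image)
    have t: "is_antichain (MK_carrier m n) MK_le (hmap n ` B) \<and> bad n (hmap n ` B)"
      by (rule type2_bwd[OF a bd])
    show ?thesis unfolding mem_Collect_eq using t c by blast
  qed
  have "bij_betw (\<lambda>A. gmap n ` A) ?S ?T"
  proof (rule bij_betw_byWitness[where f' = "\<lambda>B. hmap n ` B"])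
    show "\<forall>A\<in>?S. hmap n ` gmap n ` A = A"
    proof
      fix A assume A: "A \<in> ?S"
      have sub: "A \<subseteq> MK_carrier m n" using A unfolding mem_Collect_eq is_antichain_def by blast
      have "hmap n ` gmap n ` A = (\<lambda>x. hmap n (gmap n x)) ` A" by (rule image_image)
      also have "\<dots> = id ` A"
      proof (rule image_cong[OF refl])
        fix x assume "x \<in> A" then have "x \<in> MK_carrier m n" by (rule subsetD[OF sub])
        then show "hmap n (gmap n x) = id x" unfolding id_apply by (rule hg)
      qed
      finally show "hmap n ` gmap n ` A = A" by simp
    qed
    show "\<forall>B\<in>?T. gmap n ` hmap n ` B = B"
    proof
      fix B assume B: "B \<in> ?T"
      have sub: "B \<subseteq> {1..m+1} \<times> K_carrier n" using B unfolding mem_Collect_eq is_antichain_def by blast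
      have "gmap n ` hmap n ` B = (\<lambda>x. gmap n (hmap n x)) ` B" by (rule image_image)
      also have "\<dots> = id ` B"
      proof (rule image_cong[OF refl])
        fix x assume "x \<in> B" then have "x \<in> {1..m+1} \<times> K_carrier n" by (rule subsetD[OF sub])
        then show "gmap n (hmap n x) = id x" unfolding id_apply by (rule gh)
      qed
      finally show "gmap n ` hmap n ` B = B" by simp
    qed
    show "(\<lambda>A. gmap n ` A) ` ?S \<subseteq> ?T" using fw by blast
    show "(\<lambda>B. hmap n ` B) ` ?T \<subseteq> ?S" using bw by blast
  qed
  then have "card ?S = card ?T" by (rule bij_betw_same_card)
  also have "\<dots> = ((m+1) choose k) * card {J. J \<subseteq> K_carrier n \<and> card J = k \<and> {(n+1, 0), (n+1, 1)} \<subseteq> J}"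
  proof -
    have "card ?T = (card {1..m+1} choose k) * card {J. J \<subseteq> K_carrier n \<and> card J = k \<and> {(n+1, 0), (n+1, 1)} \<subseteq> J}"
      by (rule grid_card[OF finite_atLeastAtMost finite_K])
    moreover have "card {1..m+1} = m+1" by simp
    ultimately show ?thesis by simp
  qed
  also have "card {J. J \<subseteq> K_carrier n \<and> card J = k \<and> {(n+1, 0), (n+1, 1)} \<subseteq> J}
      = (if 2 \<le> k then (2*n) choose (k-2) else 0)"
  proof -
    have z: "{(n+1, 0::nat), (n+1, 1)} \<subseteq> K_carrier n" unfolding K_carrier_def by auto
    have cz: "card {(n+1, 0::nat), (n+1, 1::nat)} = 2" by simp
    show ?thesis unfolding subsets_containing[OF finite_K z] cz card_K by simp
  qed
  finally show ?thesis .
qed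

definition fco :: "nat \<Rightarrow> nat \<Rightarrow> nat \<Rightarrow> nat" where
  "fco m n k = (m choose k) * ((2*n+2) choose k) + ((m+1) choose k) * (if 2 \<le> k then (2*n) choose (k-2) else 0)"

lemma ant_card:
  "card {A. is_antichain (MK_carrier m n) MK_le A \<and> card A = k} = fco m n k"
proof -
  let ?S = "{A. is_antichain (MK_carrier m n) MK_le A \<and> card A = k}"
  let ?S1 = "{A. is_antichain (MK_carrier m n) MK_le A \<and> card A = k \<and> \<not> bad n A}"
  let ?S2 = "{A. is_antichain (MK_carrier m n) MK_le A \<and> card A = k \<and> bad n A}"
  have fin: "finite ?S"
  proof (rule finite_subset[of _ "Pow (MK_carrier m n)"])
    show "?S \<subseteq> Pow (MK_carrier m n)" unfolding is_antichain_def by blast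
    show "finite (Pow (MK_carrier m n))" using finite_MK by (rule finite_Pow_iff[THEN iffD2])
  qed
  have e: "?S = ?S1 \<union> ?S2" by blast
  have f1: "finite ?S1" by (rule finite_subset[OF _ fin]) blast
  have f2: "finite ?S2" by (rule finite_subset[OF _ fin]) blast
  have d: "?S1 \<inter> ?S2 = {}" by blast
  have "card ?S = card ?S1 + card ?S2" unfolding e by (rule card_Un_disjoint[OF f1 f2 d])
  then show ?thesis unfolding fco_def type1_card type2_card .
qed

lemma coeff_ant: "coeff (antichain_poly (MK_carrier m n) MK_le) k = int (fco m n k)"
proof -
  let ?S = "{A. is_antichain (MK_carrier m n) MK_le A}"
  have fin: "finite ?S"
  proof (rule finite_subset[of _ "Pow (MK_carrier m n)"])
    show "?S \<subseteq> Pow (MK_carrier m n)" unfolding is_antichain_def by blast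
    show "finite (Pow (MK_carrier m n))" using finite_MK by (rule finite_Pow_iff[THEN iffD2])
  qed
  have "coeff (antichain_poly (MK_carrier m n) MK_le) k = (\<Sum>A\<in>?S. if card A = k then 1 else 0)"
    unfolding antichain_poly_def coeff_sum coeff_monom by (rule sum.cong) auto
  also have "\<dots> = (\<Sum>A\<in>{A\<in>?S. card A = k}. 1)"
    using fin by (rule sum.inter_filter[symmetric])
  also have "\<dots> = int (card {A\<in>?S. card A = k})" by simp
  also have "{A\<in>?S. card A = k} = {A. is_antichain (MK_carrier m n) MK_le A \<and> card A = k}" by blast
  finally show ?thesis using ant_card by simp
qed



definition rho :: "nat \<times> nat \<times> nat \<Rightarrow> nat" where "rho p = fst p + fst (snd p)"

lemma rank_MK:
  assumes x: "x \<in> MK_carrier m n"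
  shows "poset_rank (MK_carrier m n) MK_le x = rho x - 1"
proof -
  obtain c l t where xx: "x = (c, (l, t))" by (metis prod.exhaust)
  have xm: "1 \<le> c" "c \<le> m" "1 \<le> l" "l \<le> 2*n+1" "t = 0 \<or> (l = n+1 \<and> t = 1)"
    using x unfolding xx by (auto simp: MK_mem)
  let ?S = "{C. is_chain (MK_carrier m n) MK_le C \<and> (\<forall>y\<in>C. MK_le y x)}"
  have finS: "finite ?S"
    by (rule finite_subset[of _ "Pow (MK_carrier m n)"]) (auto simp: is_chain_def finite_MK)
  have ub: "card C \<le> c + l - 1" if C: "C \<in> ?S" for C
  proof -
    have sub: "C \<subseteq> MK_carrier m n" using C unfolding is_chain_def by blast
    have "inj_on rho C"
    proof (rule inj_onI)
      fix y z assume y: "y \<in> C" and z: "z \<in> C" and e: "rho y = rho z"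
      obtain a b s where yy: "y = (a, (b, s))" by (metis prod.exhaust)
      obtain a' b' s' where zz: "z = (a', (b', s'))" by (metis prod.exhaust)
      have "MK_le y z \<or> MK_le z y" using C y z unfolding is_chain_def by blast
      then show "y = z" using e unfolding yy zz rho_def by (auto simp: MK_le_simp)
    qed
    moreover have "rho ` C \<subseteq> {2..c+l}"
    proof
      fix r assume "r \<in> rho ` C"
      then obtain a b s where y: "(a, (b, s)) \<in> C" "r = rho (a, (b, s))" by (metis imageE prod.exhaust)
      have "MK_le (a, (b, s)) x" using C y(1) by blast
      moreover have "(a, (b, s)) \<in> MK_carrier m n" using sub y(1) by blast
      ultimately show "r \<in> {2..c+l}" using y(2) unfolding xx rho_def by (auto simp: MK_le_simp MK_mem)
    qed
    ultimately have "card C \<le> card {2..c+l}"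
      by (metis card_image card_mono finite_atLeastAtMost)
    then show ?thesis by simp
  qed
  define C0 where "C0 = (\<lambda>j. (1::nat, (j, 0::nat))) ` {1..<l} \<union> (\<lambda>j. (j, (l, t))) ` {1..c}"
  have C0S: "C0 \<in> ?S"
  proof -
    have "C0 \<subseteq> MK_carrier m n" unfolding C0_def using xm by (auto simp: MK_mem)
    moreover have "\<forall>y\<in>C0. \<forall>z\<in>C0. MK_le y z \<or> MK_le z y"
      unfolding C0_def by (auto simp: MK_le_simp)
    moreover have "\<forall>y\<in>C0. MK_le y x" unfolding C0_def xx using xm by (auto simp: MK_le_simp)
    ultimately show ?thesis unfolding is_chain_def by blast
  qed
  have "card C0 = (l - 1) + c"
    unfolding C0_def using xm
    by (subst card_Un_disjoint) (auto simp: card_image inj_on_def)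
  then have cC0: "card C0 = c + l - 1" using xm by simp
  have "poset_rank (MK_carrier m n) MK_le x = Max (card ` ?S)" unfolding poset_rank_def by simp
  also have "\<dots> = c + l - 1"
  proof (rule Max_eqI)
    show "finite (card ` ?S)" using finS by (rule finite_imageI)
    fix y assume "y \<in> card ` ?S"
    then obtain C where "C \<in> ?S" "y = card C" by blast
    then show "y \<le> c + l - 1" using ub by blast
  next
    show "c + l - 1 \<in> card ` ?S" by (rule image_eqI[where f = card, OF cC0[symmetric] C0S])
  qed
  finally show ?thesis unfolding xx rho_def by simp
qed

lemma rank_level_MK:
  "rank_level (MK_carrier m n) MK_le r = {p \<in> MK_carrier m n. rho p - 1 = r}"
  unfolding rank_level_def using rank_MK by auto

lemma rank_image_MK:
  "poset_rank (MK_carrier m n) MK_le ` MK_carrier m n = (\<lambda>p. rho p - 1) ` MK_carrier m n"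
  using rank_MK by (auto simp: image_def)



definition Lv :: "nat \<Rightarrow> nat \<Rightarrow> nat \<Rightarrow> (nat \<times> nat \<times> nat) set" where
  "Lv m n r = {p \<in> MK_carrier m n. rho p - 1 = r}"

definition Tv where "Tv m n r = {p \<in> Lv m n r. snd (snd p) = 0}"
definition Sv where "Sv m n r = {p \<in> Lv m n r. snd (snd p) = 1}"

lemma Lv_split: "Lv m n r = Tv m n r \<union> Sv m n r"
  unfolding Lv_def Tv_def Sv_def by (auto simp: MK_carrier_def K_carrier_def)

lemma fin_Lv: "finite (Lv m n r)" unfolding Lv_def using finite_MK by simp
lemma fin_Tv: "finite (Tv m n r)" unfolding Tv_def using fin_Lv by simp
lemma fin_Sv: "finite (Sv m n r)" unfolding Sv_def using fin_Lv by simp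

lemma Sv_sub: "Sv m n r \<subseteq> {(r - n, (n+1, 1))}"
  unfolding Sv_def Lv_def rho_def by (auto simp: MK_carrier_def K_carrier_def)

lemma card_Sv: "card (Sv m n r) \<le> 1"
proof -
  have "card (Sv m n r) \<le> card {(r - n, (n+1, 1::nat))}" by (rule card_mono[OF _ Sv_sub]) simp
  then show ?thesis by simp
qed

lemma Sv_mem: "1 \<le> r - n \<Longrightarrow> r - n \<le> m \<Longrightarrow> n < r \<Longrightarrow> (r - n, (n+1, 1)) \<in> Sv m n r"
  unfolding Sv_def Lv_def rho_def by (auto simp: MK_mem)

lemma Sv_empty: "Sv m n r \<noteq> {} \<Longrightarrow> n < r \<and> r - n \<le> m"
  unfolding Sv_def Lv_def rho_def by (auto simp: MK_mem)

lemma inj_fst_Tv: "inj_on fst (Tv m n r)"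
  unfolding Tv_def Lv_def rho_def inj_on_def by (auto simp: MK_carrier_def K_carrier_def)

lemma inj_lev_Tv: "inj_on (\<lambda>p. fst (snd p)) (Tv m n r)"
  unfolding Tv_def Lv_def rho_def inj_on_def by (auto simp: MK_carrier_def K_carrier_def)

lemma card_Tv_fst: "fst ` Tv m n r \<subseteq> X \<Longrightarrow> finite X \<Longrightarrow> card (Tv m n r) \<le> card X"
proof -
  assume a: "fst ` Tv m n r \<subseteq> X" "finite X"
  have "card (Tv m n r) = card (fst ` Tv m n r)" by (rule card_image[OF inj_fst_Tv, symmetric])
  also have "\<dots> \<le> card X" by (rule card_mono[OF a(2) a(1)])
  finally show ?thesis .
qed

lemma card_Tv_lev: "card (Tv m n r) \<le> 2*n+1"
proof -
  have "(\<lambda>p. fst (snd p)) ` Tv m n r \<subseteq> {1..2*n+1}"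
    unfolding Tv_def Lv_def by (auto simp: MK_carrier_def K_carrier_def)
  then have "card ((\<lambda>p. fst (snd p)) ` Tv m n r) \<le> card {1..2*n+1}" by (rule card_mono[OF finite_atLeastAtMost])
  moreover have "card (Tv m n r) = card ((\<lambda>p. fst (snd p)) ` Tv m n r)" by (rule card_image[OF inj_lev_Tv, symmetric])
  ultimately show ?thesis by simp
qed

lemma card_Tv_m: "card (Tv m n r) \<le> m"
proof -
  have "fst ` Tv m n r \<subseteq> {1..m}" unfolding Tv_def Lv_def by (auto simp: MK_carrier_def)
  then have "card (Tv m n r) \<le> card {1..m}" by (rule card_Tv_fst[OF _ finite_atLeastAtMost])
  then show ?thesis by simp
qed

lemma card_Lv_le: "card (Lv m n r) \<le> card (Tv m n r) + card (Sv m n r)"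
  unfolding Lv_split by (rule card_Un_le)

lemma card_Lv_ub: "card (Lv m n r) \<le> min m (2*n+1) + 1"
  using card_Lv_le[of m n r] card_Sv[of m n r] card_Tv_m[of m n r] card_Tv_lev[of m n r] by linarith

lemma Tv_full_cols:
  assumes "m \<le> r" "r \<le> 2*n+1"
  shows "card (Tv m n r) = m"
proof -
  have "(\<lambda>c. (c, (r + 1 - c, 0::nat))) ` {1..m} \<subseteq> Tv m n r"
    using assms unfolding Tv_def Lv_def rho_def by (auto simp: MK_mem)
  moreover have "card ((\<lambda>c. (c, (r + 1 - c, 0::nat))) ` {1..m}) = m"
    by (subst card_image) (auto simp: inj_on_def)
  ultimately have "m \<le> card (Tv m n r)" using card_mono[OF fin_Tv] by metis
  then show ?thesis using card_Tv_m[of m n r] by simp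
qed

lemma Tv_full_levs:
  assumes "2*n+1 \<le> r" "r \<le> m"
  shows "card (Tv m n r) = 2*n+1"
proof -
  have "(\<lambda>l. (r + 1 - l, (l, 0::nat))) ` {1..2*n+1} \<subseteq> Tv m n r"
    using assms unfolding Tv_def Lv_def rho_def by (auto simp: MK_mem)
  moreover have "card ((\<lambda>l. (r + 1 - l, (l, 0::nat))) ` {1..2*n+1}) = 2*n+1"
    by (subst card_image) (auto simp: inj_on_def)
  ultimately have "2*n+1 \<le> card (Tv m n r)" using card_mono[OF fin_Tv] by metis
  then show ?thesis using card_Tv_lev[of m n r] by simp
qed

lemma card_Lv_eq: "card (Lv m n r) = card (Tv m n r) + card (Sv m n r)"
  unfolding Lv_split by (rule card_Un_disjoint[OF fin_Tv fin_Sv]) (auto simp: Tv_def Sv_def)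



lemma card_Sv1: "n < r \<Longrightarrow> r - n \<le> m \<Longrightarrow> card (Sv m n r) = 1"
  using card_Sv[of m n r] Sv_mem[of r n m] fin_Sv[of m n r]
  by (metis One_nat_def Suc_leI card_0_eq empty_iff le_antisym zero_less_diff not_less_zero neq0_conv)

lemma in_image: "Lv m n r \<noteq> {} \<Longrightarrow> r \<in> (\<lambda>p. rho p - 1) ` MK_carrier m n"
  unfolding Lv_def by auto

lemma unique_iff:
  assumes "1 \<le> m" "1 \<le> n"
  shows "unique_max_rank_level (MK_carrier m n) MK_le \<longleftrightarrow> (m = 1 \<or> m = 2*n+1)"
proof -
  have U: "unique_max_rank_level (MK_carrier m n) MK_le \<longleftrightarrow>
     (\<exists>r\<in>(\<lambda>p. rho p - 1) ` MK_carrier m n. \<forall>r'\<in>(\<lambda>p. rho p - 1) ` MK_carrier m n.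
        r' \<noteq> r \<longrightarrow> card (Lv m n r') < card (Lv m n r))"
    unfolding unique_max_rank_level_def rank_image_MK rank_level_MK Lv_def by simp
  have ne: "Lv m n r \<noteq> {}" if "card (Lv m n r) > 0" for r using that by auto
  show ?thesis
  proof (cases "m = 1 \<or> m = 2*n+1")
    case True
    then consider "m = 1" | "m = 2*n+1" by blast
    then show ?thesis
    proof cases
      case 1
      have c: "card (Lv m n (n+1)) = 2"
        using Tv_full_cols[of m "n+1" n] card_Sv1[of n "n+1" m] card_Lv_eq[of m n "n+1"] 1 by simp
      have o: "card (Lv m n r') < 2" if "r' \<noteq> n+1" for r'
      proof -
        have "Sv m n r' = {}" using Sv_empty[of m n r'] that 1 by fastforce
        then show ?thesis using card_Lv_eq[of m n r'] card_Tv_m[of m n r'] 1 by simp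
      qed
      have "n+1 \<in> (\<lambda>p. rho p - 1) ` MK_carrier m n" using c by (intro in_image ne) simp
      then show ?thesis unfolding U using c o 1 by metis
    next
      case 2
      let ?r = "2*n+1"
      have c: "card (Lv m n ?r) = m + 1"
        using Tv_full_cols[of m ?r n] card_Sv1[of n ?r m] card_Lv_eq[of m n ?r] 2 by simp
      have o: "card (Lv m n r') < m + 1" if "r' \<noteq> ?r" for r'
      proof -
        have "card (Tv m n r') \<le> m - 1"
        proof (cases "r' < ?r")
          case True
          have "fst ` Tv m n r' \<subseteq> {1..r'}" unfolding Tv_def Lv_def rho_def
            by (auto simp: MK_carrier_def K_carrier_def)
          then have "card (Tv m n r') \<le> card {1..r'}" by (intro card_Tv_fst) auto
          then show ?thesis using True 2 by simp
        next
          case False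
          then have "?r < r'" using that by simp
          have "fst ` Tv m n r' \<subseteq> {2..m}" using \<open>?r < r'\<close> unfolding Tv_def Lv_def rho_def
            by (auto simp: MK_carrier_def K_carrier_def)
          then have "card (Tv m n r') \<le> card {2..m}" by (intro card_Tv_fst) auto
          then show ?thesis by simp
        qed
        then show ?thesis using card_Lv_eq[of m n r'] card_Sv[of m n r'] 2 by simp
      qed
      have "?r \<in> (\<lambda>p. rho p - 1) ` MK_carrier m n" using c by (intro in_image ne) simp
      then show ?thesis unfolding U using c o 2 by metis
    qed
  next
    case False
    then have m2: "2 \<le> m" "m \<noteq> 2*n+1" using assms by auto
    obtain r1 where r: "card (Lv m n r1) = min m (2*n+1) + 1" "card (Lv m n (r1+1)) = min m (2*n+1) + 1"
    proof (cases "m \<le> 2*n")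
      case True
      let ?r = "max m (n+1)"
      have "card (Lv m n ?r) = m + 1"
        using Tv_full_cols[of m ?r n] card_Sv1[of n ?r m] card_Lv_eq[of m n ?r] True m2 assms by simp
      moreover have "card (Lv m n (?r+1)) = m + 1"
        using Tv_full_cols[of m "?r+1" n] card_Sv1[of n "?r+1" m] card_Lv_eq[of m n "?r+1"] True m2 assms
        by simp
      ultimately show ?thesis using that True by simp
    next
      case False
      then have mm: "2*n+2 \<le> m" using m2 by simp
      let ?r = "2*n+1"
      have "card (Lv m n ?r) = 2*n+2"
        using Tv_full_levs[of n ?r m] card_Sv1[of n ?r m] card_Lv_eq[of m n ?r] mm by simp
      moreover have "card (Lv m n (?r+1)) = 2*n+2"
        using Tv_full_levs[of n "?r+1" m] card_Sv1[of n "?r+1" m] card_Lv_eq[of m n "?r+1"] mm by simp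
      ultimately show ?thesis using that mm by simp
    qed
    have i1: "r1 \<in> (\<lambda>p. rho p - 1) ` MK_carrier m n" using r by (intro in_image ne) simp
    have i2: "r1+1 \<in> (\<lambda>p. rho p - 1) ` MK_carrier m n" using r by (intro in_image ne) simp
    have "\<not> (\<exists>r\<in>(\<lambda>p. rho p - 1) ` MK_carrier m n. \<forall>r'\<in>(\<lambda>p. rho p - 1) ` MK_carrier m n.
        r' \<noteq> r \<longrightarrow> card (Lv m n r') < card (Lv m n r))"
    proof
      assume "\<exists>r\<in>(\<lambda>p. rho p - 1) ` MK_carrier m n. \<forall>r'\<in>(\<lambda>p. rho p - 1) ` MK_carrier m n.
        r' \<noteq> r \<longrightarrow> card (Lv m n r') < card (Lv m n r)"
      then obtain r where "\<forall>r'\<in>(\<lambda>p. rho p - 1) ` MK_carrier m n.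
        r' \<noteq> r \<longrightarrow> card (Lv m n r') < card (Lv m n r)" by blast
      then show False using i1 i2 r card_Lv_ub[of m n r]
        by (metis add.commute leD n_not_Suc_n plus_1_eq_Suc)
    qed
    then show ?thesis unfolding U using False by simp
  qed
qed



lemma binom_ge2: "0 < j \<Longrightarrow> j < a \<Longrightarrow> 2 \<le> a choose j"
proof -
  assume j: "0 < j" "j < a"
  obtain a' where a: "a = Suc a'" using j by (cases a) auto
  obtain j' where jj: "j = Suc j'" using j by (cases j) auto
  have e: "a choose j = (a' choose j') + (a' choose j)" unfolding a jj by (rule binomial_Suc_Suc)
  have "j' \<le> a'" "j \<le> a'" using j a jj by linarith+
  then have "0 < a' choose j'" "0 < a' choose j" by (simp_all add: zero_less_binomial_iff)
  then show ?thesis unfolding e by linarith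
qed

lemma fco0: "fco m n 0 = 1" unfolding fco_def by simp

lemma fco_big:
  assumes "min (m+1) (2*n+2) < k" shows "fco m n k = 0"
proof (cases "m+1 \<le> 2*n+2")
  case True
  then have "m < k" "m+1 < k" using assms by linarith+
  then have "m choose k = 0" "(m+1) choose k = 0" by (simp_all add: binomial_eq_0)
  then show ?thesis unfolding fco_def by simp
next
  case False
  then have "2*n+2 < k" "2*n < k-2" using assms by linarith+
  then have "(2*n+2) choose k = 0" "(2*n) choose (k-2) = 0" by (simp_all add: binomial_eq_0)
  then show ?thesis unfolding fco_def by simp
qed

lemma fco_top_small: "1 \<le> m \<Longrightarrow> m \<le> 2*n \<Longrightarrow> fco m n (m+1) = (2*n) choose (m-1)"
proof -
  assume "1 \<le> m" "m \<le> 2*n"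
  then have "m choose (m+1) = 0" "(m+1) choose (m+1) = 1" "2 \<le> m+1" "m+1-2 = m-1" by simp_all
  then show ?thesis unfolding fco_def by simp
qed

lemma fco_top_big: "2*n+1 \<le> m \<Longrightarrow> fco m n (2*n+2) = (m choose (2*n+2)) + ((m+1) choose (2*n+2))"
proof -
  have "(2*n+2) choose (2*n+2) = 1" "2*n+2-2 = 2*n" "(2*n) choose (2*n) = 1" "2 \<le> 2*n+2" by simp_all
  then show ?thesis unfolding fco_def by simp
qed

lemma fco_top_pos: assumes m1: "1 \<le> m" shows "0 < fco m n (min (m+1) (2*n+2))"
proof (cases "m \<le> 2*n")
  case True
  then have e: "min (m+1) (2*n+2) = m+1" by simp
  have "0 < (2*n) choose (m-1)" using True by (simp add: zero_less_binomial_iff)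
  then show ?thesis unfolding e fco_top_small[OF m1 True] .
next
  case False
  then have e: "min (m+1) (2*n+2) = 2*n+2" by simp
  have "0 < (m+1) choose (2*n+2)" using False by (simp add: zero_less_binomial_iff)
  moreover have "fco m n (2*n+2) = (m choose (2*n+2)) + ((m+1) choose (2*n+2))"
    using False by (intro fco_top_big) linarith
  ultimately show ?thesis unfolding e by linarith
qed

lemma deg_ant: assumes m1: "1 \<le> m" shows "degree (antichain_poly (MK_carrier m n) MK_le) = min (m+1) (2*n+2)"
proof (rule antisym)
  show "degree (antichain_poly (MK_carrier m n) MK_le) \<le> min (m+1) (2*n+2)"
  proof (rule degree_le, intro allI impI)
    fix i assume "min (m+1) (2*n+2) < i"
    then show "coeff (antichain_poly (MK_carrier m n) MK_le) i = 0" unfolding coeff_ant fco_big[OF \<open>min (m+1) (2*n+2) < i\<close>] by simp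
  qed
  show "min (m+1) (2*n+2) \<le> degree (antichain_poly (MK_carrier m n) MK_le)"
  proof (rule le_degree)
    show "coeff (antichain_poly (MK_carrier m n) MK_le) (min (m+1) (2*n+2)) \<noteq> 0"
      unfolding coeff_ant using fco_top_pos[OF m1, of n] by simp
  qed
qed

lemma monic_iff:
  assumes "1 \<le> m" "1 \<le> n"
  shows "monic_poly (antichain_poly (MK_carrier m n) MK_le) \<longleftrightarrow> (m = 1 \<or> m = 2*n+1)"
proof -
  have "monic_poly (antichain_poly (MK_carrier m n) MK_le) \<longleftrightarrow> int (fco m n (min (m+1) (2*n+2))) = 1"
    unfolding monic_poly_def deg_ant[OF assms(1)] coeff_ant ..
  also have "\<dots> \<longleftrightarrow> fco m n (min (m+1) (2*n+2)) = 1" by linarith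
  also have "\<dots> \<longleftrightarrow> (m = 1 \<or> m = 2*n+1)"
  proof (cases "m \<le> 2*n")
    case True
    have mm: "min (m+1) (2*n+2) = m+1" using True by simp
    have e: "fco m n (min (m+1) (2*n+2)) = (2*n) choose (m-1)"
      unfolding mm by (rule fco_top_small[OF assms(1) True])
    show ?thesis
    proof (cases "m = 1")
      case True then show ?thesis unfolding e by simp
    next
      case False
      have "0 < m - 1" "m - 1 < 2*n" using \<open>m \<le> 2*n\<close> False assms by linarith+
      then have "2 \<le> (2*n) choose (m-1)" by (rule binom_ge2)
      then have ne: "(2*n) choose (m-1) \<noteq> 1" by linarith
      have "m \<noteq> 2*n+1" using \<open>m \<le> 2*n\<close> by linarith
      then show ?thesis unfolding e using False ne by blast
    qed
  next
    case False
    have mm: "min (m+1) (2*n+2) = 2*n+2" using False by simp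
    have e: "fco m n (min (m+1) (2*n+2)) = (m choose (2*n+2)) + ((m+1) choose (2*n+2))"
      unfolding mm using False by (intro fco_top_big) linarith
    show ?thesis
    proof (cases "m = 2*n+1")
      case True then show ?thesis unfolding e by simp
    next
      case False
      then have "2*n+2 \<le> m" "2*n+2 \<le> m+1" using \<open>\<not> m \<le> 2*n\<close> by linarith+
      then have "0 < m choose (2*n+2)" "0 < (m+1) choose (2*n+2)" by (simp_all add: zero_less_binomial_iff)
      then have ne: "(m choose (2*n+2)) + ((m+1) choose (2*n+2)) \<noteq> 1" by linarith
      have "m \<noteq> 1" using \<open>\<not> m \<le> 2*n\<close> assms(2) by linarith
      then show ?thesis unfolding e using False ne by blast
    qed
  qed
  finally show ?thesis .
qed

lemma palin_imp_monic:
  assumes "palindromic (antichain_poly (MK_carrier m n) MK_le)"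
  shows "monic_poly (antichain_poly (MK_carrier m n) MK_le)"
proof -
  let ?p = "antichain_poly (MK_carrier m n) MK_le"
  have "coeff ?p 0 = coeff ?p (degree ?p - 0)" using assms unfolding palindromic_def by blast
  then have "coeff ?p (degree ?p) = 1" unfolding coeff_ant fco0 by simp
  then show ?thesis unfolding monic_poly_def .
qed

lemma sym_aux:
  fixes M k :: nat
  assumes "k \<le> M + 2"
  shows "((M+1) choose k) + (if 2 \<le> k then M choose (k-2) else 0)
       = ((M+1) choose (M+2-k)) + (if 2 \<le> M+2-k then M choose (M+2-k-2) else 0)"
proof -
  have h: "((M+1) choose j) + (if 2 \<le> j then M choose (j-2) else 0)
      = (M choose j) + (if 1 \<le> j then M choose (j-1) else 0) + (if 2 \<le> j then M choose (j-2) else 0)" for j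
  proof (cases j)
    case 0 then show ?thesis by simp
  next
    case (Suc i) then show ?thesis by simp
  qed
  have a: "M choose k = (if 2 \<le> M+2-k then M choose (M+2-k-2) else 0)"
  proof (cases "k \<le> M")
    case True
    then have "2 \<le> M+2-k" "M+2-k-2 = M-k" by linarith+
    then show ?thesis using binomial_symmetric[OF True] by simp
  next
    case False
    then have "\<not> 2 \<le> M+2-k" "M < k" by linarith+
    then show ?thesis by (simp add: binomial_eq_0)
  qed
  have b: "(if 1 \<le> k then M choose (k-1) else 0) = (if 1 \<le> M+2-k then M choose (M+2-k-1) else 0)"
  proof (cases "1 \<le> k \<and> k \<le> M+1")
    case True
    then have e: "M+2-k-1 = M - (k-1)" "k - 1 \<le> M" "1 \<le> M+2-k" by linarith+
    then show ?thesis using True binomial_symmetric[OF e(2)] by simp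
  next
    case False
    then have "k = 0 \<or> k = M+2" using assms by linarith
    then show ?thesis
    proof
      assume "k = 0" then show ?thesis by (simp add: binomial_eq_0)
    next
      assume "k = M+2" then show ?thesis by (simp add: binomial_eq_0)
    qed
  qed
  have c: "(if 2 \<le> k then M choose (k-2) else 0) = M choose (M+2-k)"
  proof (cases "2 \<le> k")
    case True
    then have e: "M+2-k = M-(k-2)" "k-2 \<le> M" using assms by linarith+
    then show ?thesis using True binomial_symmetric[OF e(2)] by simp
  next
    case False
    then have "M < M+2-k" by linarith
    then show ?thesis using False by (simp add: binomial_eq_0)
  qed
  show ?thesis unfolding h[of k] h[of "M+2-k"] using a b c by linarith
qed

lemma palin_special:
  assumes "1 \<le> n" "m = 1 \<or> m = 2*n+1"
  shows "palindromic (antichain_poly (MK_carrier m n) MK_le)"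
proof -
  have m1: "1 \<le> m" using assms(2) by (elim disjE) simp_all
  show ?thesis unfolding palindromic_def deg_ant[OF m1] coeff_ant
  proof (intro allI impI)
    fix k assume k: "k \<le> min (m+1) (2*n+2)"
    from assms(2) show "int (fco m n k) = int (fco m n (min (m+1) (2*n+2) - k))"
    proof
      assume m: "m = 1"
      have mm: "min (m+1) (2*n+2) = 2" using m assms(1) by simp
      have "k \<le> 2" using k mm by simp
      then consider "k = 0" | "k = 1" | "k = 2" by linarith
      then show ?thesis
      proof cases
        case 1 then show ?thesis using mm by (simp add: m fco_def)
      next
        case 2 then show ?thesis using mm by simp
      next
        case 3
        have b: "Suc 0 choose 2 = 0" "Suc (Suc 0) choose 2 = 1" by (simp_all add: numeral_2_eq_2)
        from 3 show ?thesis using mm b by (simp add: m fco_def)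
      qed
    next
      assume m: "m = 2*n+1"
      then have mk: "min (m+1) (2*n+2) = 2*n+2" by simp
      have k2: "k \<le> 2*n+2" using k mk by simp
      have f1: "fco m n k = ((2*n+2) choose k) * (((2*n+1) choose k) + (if 2 \<le> k then (2*n) choose (k-2) else 0))"
        unfolding fco_def m by (simp add: algebra_simps)
      have f2: "fco m n (2*n+2-k) = ((2*n+2) choose (2*n+2-k)) * (((2*n+1) choose (2*n+2-k))
          + (if 2 \<le> 2*n+2-k then (2*n) choose (2*n+2-k-2) else 0))"
        unfolding fco_def m by (simp add: algebra_simps)
      have b1: "(2*n+2) choose k = (2*n+2) choose (2*n+2-k)" by (rule binomial_symmetric[OF k2])
      have b2: "((2*n+1) choose k) + (if 2 \<le> k then (2*n) choose (k-2) else 0)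
          = ((2*n+1) choose (2*n+2-k)) + (if 2 \<le> 2*n+2-k then (2*n) choose (2*n+2-k-2) else 0)"
        using sym_aux[of k "2*n"] k2 by simp
      show ?thesis unfolding mk f1 f2 b1 b2 ..
    qed
  qed
qed


theorem theorem7p2:
  fixes m n :: nat
  assumes "m \<ge> 1" and "n \<ge> 1"
  shows "(unique_max_rank_level (MK_carrier m n) MK_le \<longleftrightarrow> (m = 1 \<or> m = 2*n+1))
       \<and> ((m = 1 \<or> m = 2*n+1) \<longleftrightarrow> monic_poly (antichain_poly (MK_carrier m n) MK_le))
       \<and> (monic_poly (antichain_poly (MK_carrier m n) MK_le)
            \<longleftrightarrow> palindromic (antichain_poly (MK_carrier m n) MK_le))"
proof (intro conjI)
  show "unique_max_rank_level (MK_carrier m n) MK_le \<longleftrightarrow> (m = 1 \<or> m = 2*n+1)"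
    by (rule unique_iff[OF assms])
  show "(m = 1 \<or> m = 2*n+1) \<longleftrightarrow> monic_poly (antichain_poly (MK_carrier m n) MK_le)"
    using monic_iff[OF assms] by simp
  show "monic_poly (antichain_poly (MK_carrier m n) MK_le) \<longleftrightarrow> palindromic (antichain_poly (MK_carrier m n) MK_le)"
  proof
    assume "monic_poly (antichain_poly (MK_carrier m n) MK_le)"
    then have "m = 1 \<or> m = 2*n+1" using monic_iff[OF assms] by simp
    then show "palindromic (antichain_poly (MK_carrier m n) MK_le)" using palin_special assms(2) by blast
  next
    assume "palindromic (antichain_poly (MK_carrier m n) MK_le)"
    then show "monic_poly (antichain_poly (MK_carrier m n) MK_le)" by (rule palin_imp_monic)
  qed
qed

end
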